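(* Let $\lambda_i \ge 0$, $\mu \ge 0$, $\alpha_i \in (0,1]$, $\sigma_i^2 > 0$, $t_i \in \mathbb{R}$, and let $h_i \neq 0$ be a fixed fading coefficient. Consider the maximization problem $$\sup_{p_i \ge 0} \left\{ -\frac{\lambda_i}{\alpha_i}\bigl(t_i - r_i(p_i,h_i)\bigr)_+ - \mu p_i \right\}, \qquad r_i(p_i,h_i) = \log\left(1 + \frac{p_i h_i^2}{\sigma_i^2}\right).$$ If $(\lambda_i,\mu) \neq (0,0)$, then an optimal solution of this problem is $$p_i^*(h_i) = \min\left\{ \left(\frac{\lambda_i}{\mu\alpha_i} - \frac{\sigma_i^2}{h_i^2}\right)_+,\ \frac{\sigma_i^2\left(e^{(t_i)_+}-1\right)}{h_i^2} \right\}.$$ If $(\lambda_i,\mu) = (0,0)$, then $p_i^* = 0$ is optimal.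
   Context: $(x)_+ = \max\{x,0\}$. When $\mu = 0$ and $\lambda_i>0$, the quantity $\frac{\lambda_i}{\mu\alpha_i}$ is interpreted as $+\infty$, so that the minimum equals its second argument. The problem arises as the per-terminal power-allocation subproblem of the Lagrangian dual of a CV@R-constrained (risk-aware) power allocation problem, with $\lambda_i,\mu$ dual variables, $\alpha_i$ a CV@R confidence level, $\sigma_i^2$ the noise variance, and $t_i$ an auxiliary (value-at-risk) variable. *)

theory Defs
  imports Complex_Main
begin

definition pos_part :: "real \<Rightarrow> real" where
  "pos_part x = max x 0"

definition rate :: "real \<Rightarrow> real \<Rightarrow> real \<Rightarrow> real" where
  "rate sigma2 p h = ln (1 + p * h^2 / sigma2)"

definition cvar_obj :: "real \<Rightarrow> real \<Rightarrow> real \<Rightarrow> real \<Rightarrow> real \<Rightarrow> real \<Rightarrow> real \<Rightarrow> real" where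
  "cvar_obj lam mu alpha sigma2 t h p =
     - (lam / alpha) * pos_part (t - rate sigma2 p h) - mu * p"

text \<open>Claimed optimizer; for mu = 0 the quotient lam/(mu*alpha) is +infinity,
  so the minimum equals its second argument.\<close>
definition pstar :: "real \<Rightarrow> real \<Rightarrow> real \<Rightarrow> real \<Rightarrow> real \<Rightarrow> real \<Rightarrow> real" where
  "pstar lam mu alpha sigma2 t h =
     (let b = sigma2 * (exp (pos_part t) - 1) / h^2 in
      if mu = 0 then b
      else min (pos_part (lam / (mu * alpha) - sigma2 / h^2)) b)"

end

theory Submission imports Defs begin
lemma lnb:
  fixes g p q :: real assumes "g>0" "p\<ge>0" "q\<ge>0"
  shows "ln(1+g*p) - ln(1+g*q) \<le> g*(p-q)/(1+g*q)"
proof -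
  have a: "1+g*p>0" "1+g*q>0" using assms by (auto intro: add_pos_nonneg)
  have "ln(1+g*p) - ln(1+g*q) = ln((1+g*p)/(1+g*q))" using a by (simp add: ln_div)
  also have "\<dots> \<le> (1+g*p)/(1+g*q) - 1" using a by (intro ln_le_minus_one) auto
  also have "\<dots> = g*(p-q)/(1+g*q)" using a by (simp add: field_simps)
  finally show ?thesis .
qed

lemma core:
  fixes c mu g t p q :: real
  assumes c: "c\<ge>0" and mu: "mu\<ge>0" and g: "g>0" and p: "p\<ge>0" and q: "q\<ge>0"
  and H: "(ln(1+g*q) = t \<and> mu*(1+g*q) \<le> c*g) \<or> (ln(1+g*q) \<le> t \<and> (p-q)*(c*g/(1+g*q) - mu) \<le> 0) \<or> (q = 0 \<and> t \<le> 0)"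
  shows "-c*max (t - ln(1+g*p)) 0 - mu*p \<le> -c*max (t - ln(1+g*q)) 0 - mu*q"
proof -
  have L: "ln(1+g*p) - ln(1+g*q) \<le> g*(p-q)/(1+g*q)" using lnb g p q by blast
  have a: "1+g*q>0" using g q by (auto intro: add_pos_nonneg)
  have lp: "ln(1+g*p) \<ge> 0" using g p by simp
  have cL: "c*(ln(1+g*p) - ln(1+g*q)) \<le> (p-q)*(c*g/(1+g*q))"
    using mult_left_mono[OF L c] by (simp add: field_simps)
  have up: "-c*max (t - ln(1+g*p)) 0 - mu*p \<le> c*(ln(1+g*p) - t) - mu*p"
    using c mult_nonneg_nonneg[of c "ln(1+g*p) - t"] by (cases "t \<le> ln(1+g*p)") (auto simp: max_def algebra_simps)
  have up2: "-c*max (t - ln(1+g*p)) 0 - mu*p \<le> - mu*p"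
    using c by (simp add: max_def)
  consider (A) "ln(1+g*q) = t" "mu*(1+g*q) \<le> c*g" | (B) "ln(1+g*q) \<le> t" "(p-q)*(c*g/(1+g*q) - mu) \<le> 0" | (C) "q = 0" "t \<le> 0" using H by blast
  then show ?thesis
  proof cases
    case A
    then have rhs: "-c*max (t - ln(1+g*q)) 0 - mu*q = - mu*q" by simp
    show ?thesis
    proof (cases "q \<le> p")
      case True then show ?thesis using rhs up2 mult_left_mono[OF True mu] by linarith
    next
      case False
      have "mu \<le> c*g/(1+g*q)" using A a by (simp add: field_simps)
      then have "(p-q)*(c*g/(1+g*q) - mu) \<le> 0" using False by (intro mult_nonpos_nonneg) auto
      moreover have "c*(ln(1+g*p) - t) \<le> c*(ln(1+g*p) - ln(1+g*q))"
        using A(1) c mult_left_mono[of "ln(1+g*p) - t" "ln(1+g*p) - ln(1+g*q)" c] by linarith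
      moreover have "(p-q)*(c*g/(1+g*q)) - mu*p = (p-q)*(c*g/(1+g*q) - mu) - mu*q" by (simp add: algebra_simps)
      ultimately show ?thesis using rhs up cL by linarith
    qed
  next
    case B
    then have rhs: "-c*max (t - ln(1+g*q)) 0 - mu*q = c*(ln(1+g*q) - t) - mu*q" by (simp add: max_def algebra_simps)
    show ?thesis using rhs up cL B(2) by (simp add: algebra_simps)
  next
    case C
    have "max (t - ln(1+g*q)) 0 = 0" using C by simp
    moreover have "mu*p \<ge> 0" using mu p by simp
    ultimately show ?thesis using up2 C by simp
  qed
qed
theorem theorem1:
  fixes lam mu alpha sigma2 t h :: real
  assumes "lam \<ge> 0" and "mu \<ge> 0" and "0 < alpha" and "alpha \<le> 1"
    and "sigma2 > 0" and "h \<noteq> 0"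
  shows "((lam, mu) \<noteq> (0, 0) \<longrightarrow>
            (let ps = pstar lam mu alpha sigma2 t h in
               ps \<ge> 0 \<and> (\<forall>p\<ge>0. cvar_obj lam mu alpha sigma2 t h p \<le> cvar_obj lam mu alpha sigma2 t h ps)))
       \<and> ((lam, mu) = (0, 0) \<longrightarrow>
            (\<forall>p\<ge>0. cvar_obj lam mu alpha sigma2 t h p \<le> cvar_obj lam mu alpha sigma2 t h 0))"
proof -
  define c where "c = lam/alpha"
  define g where "g = h^2/sigma2"
  have c0: "c \<ge> 0" using assms unfolding c_def by simp
  have g0: "g > 0" using assms unfolding g_def by simp
  have obj: "cvar_obj lam mu alpha sigma2 t h p = -c*max (t - ln(1+g*p)) 0 - mu*p" for p
    unfolding cvar_obj_def rate_def pos_part_def c_def g_def by (simp add: mult.commute)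
  define b where "b = (exp (max t 0) - 1)/g"
  have b0: "b \<ge> 0" unfolding b_def using g0 by simp
  have ps: "pstar lam mu alpha sigma2 t h = (if mu = 0 then b else min (max (c/mu - 1/g) 0) b)"
    unfolding pstar_def b_def Let_def pos_part_def c_def g_def by (simp add: field_simps)
  have part1: "pstar lam mu alpha sigma2 t h \<ge> 0 \<and> (\<forall>p\<ge>0. cvar_obj lam mu alpha sigma2 t h p \<le> cvar_obj lam mu alpha sigma2 t h (pstar lam mu alpha sigma2 t h))"
  proof -
    define q where "q = pstar lam mu alpha sigma2 t h"
    have q0: "q \<ge> 0" unfolding q_def ps using b0 by auto
    have H: "(ln(1+g*q) = t \<and> mu*(1+g*q) \<le> c*g) \<or> (ln(1+g*q) \<le> t \<and> (p-q)*(c*g/(1+g*q) - mu) \<le> 0) \<or> (q = 0 \<and> t \<le> 0)"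
      if p: "p \<ge> 0" for p
    proof (cases "t \<le> 0")
      case True
      then have "b = 0" unfolding b_def by simp
      then have "q = 0" unfolding q_def ps by auto
      then show ?thesis using True by blast
    next
      case False
      then have bt: "1 + g*b = exp t" unfolding b_def using g0 by simp
      then have lnb: "ln(1+g*b) = t" by simp
      show ?thesis
      proof (cases "mu = 0")
        case True
        then have "q = b" unfolding q_def ps by simp
        then show ?thesis using lnb True c0 g0 by simp
      next
        case False
        then have mu: "mu > 0" using assms by simp
        show ?thesis
        proof (cases "max (c/mu - 1/g) 0 \<ge> b")
          case True
          then have qb: "q = b" unfolding q_def ps using False by simp
          have "b > 0" unfolding b_def using g0 \<open>\<not> t \<le> 0\<close> by (simp add: divide_pos_pos)
          then have "b \<le> c/mu - 1/g" using True by (auto simp: max_def split: if_splits)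
          then have "mu*(1+g*b) \<le> mu*(1 + g*(c/mu - 1/g))" using mu g0 by (intro mult_left_mono add_left_mono) auto
          also have "\<dots> = c*g" using mu g0 by (simp add: field_simps)
          finally show ?thesis using qb lnb by simp
        next
          case nb: False
          then have qa: "q = max (c/mu - 1/g) 0" unfolding q_def ps using False by simp
          have "q \<le> b" using nb qa by linarith
          then have "g*q \<le> g*b" using g0 by (simp add: mult_left_mono)
          moreover have "1 + g*q > 0" using g0 q0 by (simp add: add_pos_nonneg)
          ultimately have "ln(1+g*q) \<le> ln(1+g*b)" by (subst ln_le_cancel_iff) auto
          then have lq: "ln(1+g*q) \<le> t" using lnb by simp
          show ?thesis
          proof (cases "c/mu - 1/g > 0")
            case True
            then have "q = c/mu - 1/g" using qa by simp
            then have "1 + g*q = c*g/mu" using g0 mu by (simp add: field_simps)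
            then have "c*g/(1+g*q) = c*g/(c*g/mu)" by simp
            also have "\<dots> = mu" using True mu g0 c0 by (auto simp: field_simps)
            finally have "c*g/(1+g*q) = mu" .
            then show ?thesis using lq by simp
          next
            case f2: False
            then have q00: "q = 0" using qa by simp
            have "c/mu \<le> 1/g" using f2 by simp
            then have "c*g \<le> mu" using mu g0 by (simp add: field_simps)
            then have "(p-q)*(c*g/(1+g*q) - mu) \<le> 0" using q00 p by (simp add: mult_nonneg_nonpos)
            then show ?thesis using lq by blast
          qed
        qed
      qed
    qed
    have "\<forall>p\<ge>0. cvar_obj lam mu alpha sigma2 t h p \<le> cvar_obj lam mu alpha sigma2 t h q"
      using core[OF c0 assms(2) g0 _ q0 H] unfolding obj by blast
    then show ?thesis using q0 unfolding q_def by blast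
  qed
  have part2: "(lam, mu) = (0, 0) \<longrightarrow> (\<forall>p\<ge>0. cvar_obj lam mu alpha sigma2 t h p \<le> cvar_obj lam mu alpha sigma2 t h 0)"
    unfolding cvar_obj_def by simp
  show ?thesis using part1 part2 by (simp add: Let_def)
qed

end
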